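(* Let $\mathcal X$ and $\mathcal Y$ be Banach spaces, let $A$ be a closed, densely defined linear operator from $\operatorname{dom}A\subset\mathcal X$ to $\mathcal Y$, and let $B$ be a closed, densely defined linear operator from $\operatorname{dom}B\subset\mathcal Y$ to $\mathcal X$. Assume $\rho(AB)\neq\emptyset$ and $\rho(BA)\neq\emptyset$. Then for every $\lambda\in\mathbb C\setminus\{0\}$: (i) $\operatorname{ran}(AB-\lambda)$ is closed if and only if $\operatorname{ran}(BA-\lambda)$ is closed; (ii) $\operatorname{ran}(AB-\lambda)$ is dense in $\mathcal Y$ if and only if $\operatorname{ran}(BA-\lambda)$ is dense in $\mathcal X$; (iii) $AB-\lambda$ is upper semi-Fredholm if and only if $BA-\lambda$ is upper semi-Fredholm; (iv) $AB-\lambda$ is lower semi-Fredholm if and only if $BA-\lambda$ is lower semi-Fredholm. Consequently, $\sigma_{ap}(AB)\setminus\{0\}=\sigma_{ap}(BA)\setminus\{0\}$, $\sigma_c(AB)\setminus\{0\}=\sigma_c(BA)\setminus\{0\}$, $\sigma_r(AB)\setminus\{0\}=\sigma_r(BA)\setminus\{0\}$, and $\sigma_{ess}(AB)\setminus\{0\}=\sigma_{ess}(BA)\setminus\{0\}$.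
   Context: Products have natural domains: $\operatorname{dom}(AB)=\{y\in\operatorname{dom}B: By\in\operatorname{dom}A\}$, $\operatorname{dom}(BA)=\{x\in\operatorname{dom}A: Ax\in\operatorname{dom}B\}$. For a linear operator $S$ in a Banach space $\mathcal Z$: $\rho(S)$ is the set of $\lambda\in\mathbb C$ with $S-\lambda:\operatorname{dom}S\to\mathcal Z$ bijective and $(S-\lambda)^{-1}$ bounded; $\sigma(S)=\mathbb C\setminus\rho(S)$. For closed densely defined $S$: the approximate point spectrum $\sigma_{ap}(S)$ is the set of $\lambda$ for which there is a sequence $(x_n)\subset\operatorname{dom}S$, $\|x_n\|=1$, $(S-\lambda)x_n\to0$; the continuous spectrum $\sigma_c(S)$ is the set of $\lambda\in\sigma(S)$ with $S-\lambda$ injective and $\operatorname{ran}(S-\lambda)$ dense; the residual spectrum $\sigma_r(S)$ is the set of $\lambda$ with $S-\lambda$ injective and $\operatorname{ran}(S-\lambda)$ not dense. $S$ is upper semi-Fredholm if $\operatorname{ran}S$ is closed and $\ker S$ is finite-dimensional; lower semi-Fredholm if $\operatorname{ran}S$ is (closed and) of finite codimension; Fredholm if both. $\sigma_{ess}(S)=\{\lambda\in\mathbb C: S-\lambda \text{ is not Fredholm}\}$. *)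

theory Defs
  imports "HOL-Analysis.Analysis"
begin

text \<open>HOL-Analysis only provides real normed spaces; a complex Banach space is a real
Banach space with a compatible complex scalar multiplication.\<close>

class complex_banach = banach +
  fixes scaleC :: "complex \<Rightarrow> 'a \<Rightarrow> 'a" (infixr \<open>*\<^sub>C\<close> 75)
  assumes scaleC_add_right: "a *\<^sub>C (x + y) = a *\<^sub>C x + a *\<^sub>C y"
    and scaleC_add_left: "(a + b) *\<^sub>C x = a *\<^sub>C x + b *\<^sub>C x"
    and scaleC_scaleC: "a *\<^sub>C (b *\<^sub>C x) = (a * b) *\<^sub>C x"
    and scaleC_one: "1 *\<^sub>C x = x"
    and scaleR_scaleC: "scaleR r x = complex_of_real r *\<^sub>C x"
    and norm_scaleC: "norm (a *\<^sub>C x) = cmod a * norm x"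

text \<open>An (unbounded) operator is a pair of a domain D and a map T (only its values on D matter).\<close>

definition csubspace :: "'a::complex_banach set \<Rightarrow> bool" where
  "csubspace D \<longleftrightarrow> 0 \<in> D \<and> (\<forall>x\<in>D. \<forall>y\<in>D. x + y \<in> D) \<and> (\<forall>c. \<forall>x\<in>D. c *\<^sub>C x \<in> D)"

definition linear_op :: "'a::complex_banach set \<Rightarrow> ('a \<Rightarrow> 'b::complex_banach) \<Rightarrow> bool" where
  "linear_op D T \<longleftrightarrow> csubspace D \<and>
     (\<forall>x\<in>D. \<forall>y\<in>D. T (x + y) = T x + T y) \<and> (\<forall>c. \<forall>x\<in>D. T (c *\<^sub>C x) = c *\<^sub>C T x)"

definition closed_op :: "'a::complex_banach set \<Rightarrow> ('a \<Rightarrow> 'b::complex_banach) \<Rightarrow> bool" where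
  "closed_op D T \<longleftrightarrow> closed ((\<lambda>x. (x, T x)) ` D)"

definition densely_defined :: "'a::complex_banach set \<Rightarrow> bool" where
  "densely_defined D \<longleftrightarrow> closure D = UNIV"

definition prod_dom :: "'y set \<Rightarrow> ('y \<Rightarrow> 'x) \<Rightarrow> 'x set \<Rightarrow> 'y set" where
  "prod_dom DB B DA = {y \<in> DB. B y \<in> DA}"

definition shift :: "('a \<Rightarrow> 'a) \<Rightarrow> complex \<Rightarrow> 'a \<Rightarrow> 'a::complex_banach" where
  "shift S l = (\<lambda>x. S x - l *\<^sub>C x)"

definition op_range :: "'a set \<Rightarrow> ('a \<Rightarrow> 'b) \<Rightarrow> 'b set" where
  "op_range D T = T ` D"

definition op_kernel :: "'a set \<Rightarrow> ('a \<Rightarrow> 'b::zero) \<Rightarrow> 'a set" where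
  "op_kernel D T = {x \<in> D. T x = 0}"

definition cspan :: "'a::complex_banach set \<Rightarrow> 'a set" where
  "cspan F = {y. \<exists>S c. finite S \<and> S \<subseteq> F \<and> y = (\<Sum>x\<in>S. c x *\<^sub>C x)}"

definition finite_dimensional :: "'a::complex_banach set \<Rightarrow> bool" where
  "finite_dimensional V \<longleftrightarrow> (\<exists>F. finite F \<and> V \<subseteq> cspan F)"

definition finite_codim :: "'a::complex_banach set \<Rightarrow> bool" where
  "finite_codim V \<longleftrightarrow> (\<exists>F. finite F \<and> {v + w | v w. v \<in> V \<and> w \<in> cspan F} = UNIV)"

definition resolvent_set :: "'a::complex_banach set \<Rightarrow> ('a \<Rightarrow> 'a) \<Rightarrow> complex set" where
  "resolvent_set D S = {l. bij_betw (shift S l) D UNIV \<and>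
      (\<exists>C. \<forall>z. norm (inv_into D (shift S l) z) \<le> C * norm z)}"

definition spectrum_op :: "'a::complex_banach set \<Rightarrow> ('a \<Rightarrow> 'a) \<Rightarrow> complex set" where
  "spectrum_op D S = - resolvent_set D S"

definition ap_spectrum :: "'a::complex_banach set \<Rightarrow> ('a \<Rightarrow> 'a) \<Rightarrow> complex set" where
  "ap_spectrum D S = {l. \<exists>x. (\<forall>n. x n \<in> D \<and> norm (x n) = 1) \<and>
      (\<lambda>n. shift S l (x n)) \<longlonglongrightarrow> 0}"

definition cont_spectrum :: "'a::complex_banach set \<Rightarrow> ('a \<Rightarrow> 'a) \<Rightarrow> complex set" where
  "cont_spectrum D S = {l \<in> spectrum_op D S. inj_on (shift S l) D \<and>
      closure (op_range D (shift S l)) = UNIV}"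

definition res_spectrum :: "'a::complex_banach set \<Rightarrow> ('a \<Rightarrow> 'a) \<Rightarrow> complex set" where
  "res_spectrum D S = {l. inj_on (shift S l) D \<and>
      closure (op_range D (shift S l)) \<noteq> UNIV}"

definition upper_semi_fredholm :: "'a::complex_banach set \<Rightarrow> ('a \<Rightarrow> 'b::complex_banach) \<Rightarrow> bool" where
  "upper_semi_fredholm D T \<longleftrightarrow> closed (op_range D T) \<and> finite_dimensional (op_kernel D T)"

definition lower_semi_fredholm :: "'a::complex_banach set \<Rightarrow> ('a \<Rightarrow> 'b::complex_banach) \<Rightarrow> bool" where
  "lower_semi_fredholm D T \<longleftrightarrow> closed (op_range D T) \<and> finite_codim (op_range D T)"

definition fredholm :: "'a::complex_banach set \<Rightarrow> ('a \<Rightarrow> 'b::complex_banach) \<Rightarrow> bool" where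
  "fredholm D T \<longleftrightarrow> upper_semi_fredholm D T \<and> lower_semi_fredholm D T"

definition ess_spectrum :: "'a set \<Rightarrow> ('a \<Rightarrow> 'a::complex_banach) \<Rightarrow> complex set" where
  "ess_spectrum D S = {l. \<not> fredholm D (shift S l)}"

end

theory Submission
  imports Defs
begin

lemma scaleC_zero_right[simp]: "c *\<^sub>C (0::'a::complex_banach) = 0"
proof -
  have "c *\<^sub>C (0::'a) = c *\<^sub>C 0 + c *\<^sub>C 0" by (metis add.right_neutral scaleC_add_right)
  then show ?thesis by simp
qed

lemma scaleC_zero_left[simp]: "0 *\<^sub>C (x::'a::complex_banach) = 0"
proof -
  have "0 *\<^sub>C x = 0 *\<^sub>C x + 0 *\<^sub>C x" by (metis add.right_neutral scaleC_add_left)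
  then show ?thesis by simp
qed

lemma scaleC_minus_right: "c *\<^sub>C (- x::'a::complex_banach) = - (c *\<^sub>C x)"
proof -
  have "c *\<^sub>C (- x) + c *\<^sub>C x = 0" by (simp flip: scaleC_add_right)
  then show ?thesis by (simp add: eq_neg_iff_add_eq_0)
qed

lemma scaleC_diff_right: "c *\<^sub>C (x - y::'a::complex_banach) = c *\<^sub>C x - c *\<^sub>C y"
  by (metis diff_conv_add_uminus scaleC_add_right scaleC_minus_right)

lemma scaleC_minus_left: "(- c) *\<^sub>C (x::'a::complex_banach) = - (c *\<^sub>C x)"
proof -
  have "(- c) *\<^sub>C x + c *\<^sub>C x = 0" by (simp flip: scaleC_add_left)
  then show ?thesis by (simp add: eq_neg_iff_add_eq_0)
qed

lemma scaleC_diff_left: "(a - b) *\<^sub>C (x::'a::complex_banach) = a *\<^sub>C x - b *\<^sub>C x"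
  by (metis diff_conv_add_uminus scaleC_add_left scaleC_minus_left)

lemma scaleC_scaleR: "c *\<^sub>C (r *\<^sub>R (x::'a::complex_banach)) = r *\<^sub>R (c *\<^sub>C x)"
  by (simp add: scaleR_scaleC scaleC_scaleC mult.commute)

lemma scaleC_eq_0_iff: "(c *\<^sub>C (x::'a::complex_banach) = 0) \<longleftrightarrow> c = 0 \<or> x = 0"
  by (metis norm_scaleC mult_eq_0_iff norm_eq_zero scaleC_zero_left zero_less_norm_iff)

lemma bounded_linear_scaleC: "bounded_linear (\<lambda>x::'a::complex_banach. c *\<^sub>C x)"
  apply (rule bounded_linear_intro[where K="cmod c"])
  by (auto simp: scaleC_add_right scaleC_scaleR norm_scaleC)

lemma continuous_scaleC[continuous_intros]:
  "continuous_on S f \<Longrightarrow> continuous_on S (\<lambda>x. c *\<^sub>C (f x::'a::complex_banach))"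
  using bounded_linear.continuous_on[OF bounded_linear_scaleC] by blast

lemma tendsto_scaleC[tendsto_intros]:
  "(f \<longlongrightarrow> a) F \<Longrightarrow> ((\<lambda>x. c *\<^sub>C (f x::'a::complex_banach)) \<longlongrightarrow> c *\<^sub>C a) F"
  using bounded_linear.tendsto[OF bounded_linear_scaleC] by blast

interpretation cvs: vector_space "scaleC :: complex \<Rightarrow> 'a::complex_banach \<Rightarrow> 'a"
  by unfold_locales (auto simp: scaleC_add_right scaleC_add_left scaleC_scaleC scaleC_one)

lemma cspan_eq: "cspan F = cvs.span F"
  unfolding cspan_def cvs.span_explicit by auto

lemma csubspace_cvs: "csubspace D \<Longrightarrow> cvs.subspace D"
  unfolding csubspace_def cvs.subspace_def by auto

lemma finite_dimensional_alt: "finite_dimensional V \<longleftrightarrow> (\<exists>F. finite F \<and> V \<subseteq> cvs.span F)"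
  unfolding finite_dimensional_def cspan_eq ..

lemma finite_codim_alt: "finite_codim V \<longleftrightarrow> (\<exists>F. finite F \<and> (\<forall>x. \<exists>v\<in>V. x - v \<in> cvs.span F))"
  unfolding finite_codim_def cspan_eq
proof
  assume "\<exists>F. finite F \<and> {v + w |v w. v \<in> V \<and> w \<in> cvs.span F} = UNIV"
  then obtain F where F: "finite F" "{v + w |v w. v \<in> V \<and> w \<in> cvs.span F} = UNIV" by blast
  have "\<exists>v\<in>V. x - v \<in> cvs.span F" for x
  proof -
    have "x \<in> {v + w |v w. v \<in> V \<and> w \<in> cvs.span F}" using F by simp
    then obtain v w where "x = v + w" "v \<in> V" "w \<in> cvs.span F" by blast
    then show ?thesis by (intro bexI[of _ v]) auto
  qed
  then show "\<exists>F. finite F \<and> (\<forall>x. \<exists>v\<in>V. x - v \<in> cvs.span F)" using F by blast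
next
  assume "\<exists>F. finite F \<and> (\<forall>x. \<exists>v\<in>V. x - v \<in> cvs.span F)"
  then obtain F where F: "finite F" "\<forall>x. \<exists>v\<in>V. x - v \<in> cvs.span F" by blast
  have "x \<in> {v + w |v w. v \<in> V \<and> w \<in> cvs.span F}" for x
  proof -
    obtain v where "v \<in> V" "x - v \<in> cvs.span F" using F by blast
    then show ?thesis by (intro CollectI exI[of _ v] exI[of _ "x - v"]) auto
  qed
  then show "\<exists>F. finite F \<and> {v + w |v w. v \<in> V \<and> w \<in> cvs.span F} = UNIV" using F by blast
qed

context
  fixes D :: "'a::complex_banach set" and T :: "'a \<Rightarrow> 'b::complex_banach"
  assumes lin: "linear_op D T"
begin

lemma lo_0: "0 \<in> D" using lin unfolding linear_op_def csubspace_def by auto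
lemma lo_add: "x \<in> D \<Longrightarrow> y \<in> D \<Longrightarrow> x + y \<in> D" using lin unfolding linear_op_def csubspace_def by auto
lemma lo_scale: "x \<in> D \<Longrightarrow> c *\<^sub>C x \<in> D" using lin unfolding linear_op_def csubspace_def by auto
lemma lo_Tadd: "x \<in> D \<Longrightarrow> y \<in> D \<Longrightarrow> T (x + y) = T x + T y" using lin unfolding linear_op_def by auto
lemma lo_Tscale: "x \<in> D \<Longrightarrow> T (c *\<^sub>C x) = c *\<^sub>C T x" using lin unfolding linear_op_def by auto
lemma lo_T0: "T 0 = 0" using lo_Tscale[OF lo_0, of 0] by simp
lemma lo_uminus: "x \<in> D \<Longrightarrow> - x \<in> D"
  using lo_scale[of x "-1"] by (simp add: scaleC_minus_left scaleC_one)
lemma lo_Tuminus: "x \<in> D \<Longrightarrow> T (- x) = - T x"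
  using lo_Tscale[of x "-1"] by (simp add: scaleC_minus_left scaleC_one)
lemma lo_diff: "x \<in> D \<Longrightarrow> y \<in> D \<Longrightarrow> x - y \<in> D"
  using lo_add lo_uminus by (metis diff_conv_add_uminus)
lemma lo_Tdiff: "x \<in> D \<Longrightarrow> y \<in> D \<Longrightarrow> T (x - y) = T x - T y"
  using lo_add lo_uminus lo_Tadd lo_Tuminus by (metis diff_conv_add_uminus)
lemma lo_scaleR: "x \<in> D \<Longrightarrow> r *\<^sub>R x \<in> D" by (simp add: scaleR_scaleC lo_scale)
lemma lo_TscaleR: "x \<in> D \<Longrightarrow> T (r *\<^sub>R x) = r *\<^sub>R T x" by (simp add: scaleR_scaleC lo_Tscale)
lemma lo_sum: "finite S \<Longrightarrow> S \<subseteq> D \<Longrightarrow> (\<Sum>s\<in>S. c s *\<^sub>C s) \<in> D \<and> T (\<Sum>s\<in>S. c s *\<^sub>C s) = (\<Sum>s\<in>S. c s *\<^sub>C T s)"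
  by (induction S rule: finite_induct) (auto simp: lo_0 lo_T0 lo_add lo_scale lo_Tadd lo_Tscale)

end

lemma linear_op_shift: "linear_op D S \<Longrightarrow> linear_op D (shift S l)"
  unfolding linear_op_def shift_def
  by (auto simp: scaleC_add_right scaleC_diff_right scaleC_scaleC mult.commute)

lemma linear_op_prod:
  assumes "linear_op DA A" "linear_op DB B"
  shows "linear_op (prod_dom DB B DA) (A \<circ> B)"
proof -
  have "A 0 = 0" "B 0 = 0" using lo_T0 assms by blast+
  then show ?thesis using assms unfolding linear_op_def csubspace_def prod_dom_def by auto
qed

lemma cgt_baire:
  fixes f :: "'a::banach \<Rightarrow> 'b::real_normed_vector" and V :: "'a set"
  assumes V: "closed V" "0 \<in> V"
  shows "\<exists>n::nat. \<exists>x0\<in>V. \<exists>r>0. \<forall>x\<in>V. dist x x0 < r \<longrightarrow> x \<in> closure {y\<in>V. norm (f y) \<le> real n}"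
proof (rule ccontr)
  assume H: "\<not> ?thesis"
  define T where "T n = V \<inter> closure {y\<in>V. norm (f y) \<le> real n}" for n
  let ?X = "top_of_set V"
  have cm: "completely_metrizable_space ?X"
    by (rule completely_metrizable_space_closedin[OF completely_metrizable_space_euclidean])
       (use V closed_closedin in auto)
  have int: "?X interior_of T n = {}" for n
  proof (rule ccontr)
    assume "?X interior_of T n \<noteq> {}"
    then obtain x U where U: "openin ?X U" "x \<in> U" "U \<subseteq> T n"
      unfolding interior_of_def by auto
    then obtain e where e: "e > 0" "\<forall>x'\<in>V. dist x' x < e \<longrightarrow> x' \<in> U"
      unfolding openin_euclidean_subtopology_iff by meson
    have "x \<in> V" using U openin_euclidean_subtopology_iff by blast
    then show False using H e U T_def by blast
  qed
  have "?X interior_of \<Union>(range T) = {}"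
    apply (rule Baire_category_alt)
    using cm int by (auto simp: T_def intro!: closedin_closed_Int)
  moreover have "\<Union>(range T) = V"
  proof
    show "\<Union>(range T) \<subseteq> V" unfolding T_def by auto
    show "V \<subseteq> \<Union>(range T)"
    proof
      fix w assume wV: "w \<in> V"
      define m where "m = nat \<lceil>norm (f w)\<rceil>"
      have "norm (f w) \<le> real m" unfolding m_def by (rule real_nat_ceiling_ge)
      then have "w \<in> {y\<in>V. norm (f y) \<le> real m}" using wV by simp
      then have "w \<in> closure {y\<in>V. norm (f y) \<le> real m}"
        by (rule subsetD[OF closure_subset])
      then have "w \<in> T m" unfolding T_def using wV by (intro IntI)
      then show "w \<in> \<Union>(range T)" by blast
    qed
  qed
  ultimately show False using V(2) by (metis empty_iff interior_of_topspace topspace_euclidean_subtopology)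
qed

lemma closed_graph_bounded:
  fixes f :: "'a::banach \<Rightarrow> 'b::banach" and V :: "'a set"
  assumes V: "closed V" "0 \<in> V" "\<And>x y. x\<in>V \<Longrightarrow> y\<in>V \<Longrightarrow> x+y \<in> V" "\<And>r x. x\<in>V \<Longrightarrow> r *\<^sub>R x \<in> V"
   and f: "\<And>x y. x\<in>V \<Longrightarrow> y\<in>V \<Longrightarrow> f(x+y) = f x + f y" "\<And>r x. x\<in>V \<Longrightarrow> f (r *\<^sub>R x) = r *\<^sub>R f x"
   and G: "closed ((\<lambda>x. (x, f x)) ` V)"
  shows "\<exists>C. \<forall>x\<in>V. norm (f x) \<le> C * norm x"
proof -
  have Vd: "x - y \<in> V" if "x \<in> V" "y \<in> V" for x y
    using V(3)[OF that(1) V(4)[OF that(2), of "-1"]] by simp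
  have fd: "f (x - y) = f x - f y" if "x \<in> V" "y \<in> V" for x y
    using f(1)[OF that(1) V(4)[OF that(2), of "-1"]] f(2)[OF that(2), of "-1"] by simp
  have f0: "f 0 = 0" using f(2)[OF V(2), of 0] by simp
  obtain n :: nat and x0 r where x0: "x0 \<in> V" "r > 0"
    and B: "\<And>x. x\<in>V \<Longrightarrow> dist x x0 < r \<Longrightarrow> x \<in> closure {y\<in>V. norm (f y) \<le> real n}"
    using cgt_baire[OF V(1,2), of f] by blast
  define E where "E = {y\<in>V. norm (f y) \<le> 2 * real n}"
  have B2: "y \<in> closure E" if "y \<in> V" "norm y < r" for y
  proof (unfold closure_approachable, intro allI impI)
    fix \<epsilon> :: real assume "\<epsilon> > 0"
    have "x0 + y \<in> closure {y\<in>V. norm (f y) \<le> real n}"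
      using B[of "x0+y"] V(3)[OF x0(1) that(1)] that by (simp add: dist_norm)
    then obtain a where a: "a \<in> V" "norm (f a) \<le> real n" "dist a (x0 + y) < \<epsilon>/2"
      unfolding closure_approachable using \<open>\<epsilon> > 0\<close> by (metis (no_types, lifting) half_gt_zero mem_Collect_eq)
    have "x0 \<in> closure {y\<in>V. norm (f y) \<le> real n}"
      using B[of x0] x0 by simp
    then obtain b where b: "b \<in> V" "norm (f b) \<le> real n" "dist b x0 < \<epsilon>/2"
      unfolding closure_approachable using \<open>\<epsilon> > 0\<close> by (metis (no_types, lifting) half_gt_zero mem_Collect_eq)
    have "a - b \<in> E"
      unfolding E_def using Vd[OF a(1) b(1)] fd[OF a(1) b(1)] a(2) b(2)
      by (auto intro: order_trans[OF norm_triangle_ineq4])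
    moreover have "dist (a - b) y < \<epsilon>"
    proof -
      have "dist (a - b) y = norm ((a - (x0 + y)) - (b - x0))" by (simp add: dist_norm algebra_simps)
      also have "\<dots> \<le> norm (a - (x0 + y)) + norm (b - x0)" by (rule norm_triangle_ineq4)
      also have "\<dots> < \<epsilon>" using a(3) b(3) by (simp add: dist_norm)
      finally show ?thesis .
    qed
    ultimately show "\<exists>x'\<in>E. dist x' y < \<epsilon>" by blast
  qed
  define K where "K = 4 * real n / r"
  have K0: "K \<ge> 0" unfolding K_def using x0(2) by simp
  have key: "\<exists>z\<in>V. norm (f z) \<le> K * norm y \<and> norm (y - z) < \<epsilon>" if yV: "y \<in> V" and ep: "\<epsilon> > 0" for y \<epsilon>
  proof (cases "y = 0")
    case True then show ?thesis using V(2) f0 ep by (intro bexI[of _ 0]) auto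
  next
    case False
    define t where "t = r / (2 * norm y)"
    have t: "t > 0" using False x0(2) by (simp add: t_def)
    have "t *\<^sub>R y \<in> closure E"
      using B2[of "t *\<^sub>R y"] V(4)[OF yV] t x0(2) False by (simp add: t_def)
    then obtain z' where z': "z' \<in> E" "dist z' (t *\<^sub>R y) < \<epsilon> * t"
      unfolding closure_approachable using t ep by (meson mult_pos_pos)
    show ?thesis
    proof (intro bexI[of _ "(1/t) *\<^sub>R z'"] conjI)
      show "(1/t) *\<^sub>R z' \<in> V" using z'(1) V(4) unfolding E_def by auto
      have "norm (f ((1/t) *\<^sub>R z')) = (1/t) * norm (f z')"
        using f(2)[of z' "1/t"] z'(1) t unfolding E_def by simp
      also have "\<dots> \<le> (1/t) * (2 * real n)" using z'(1) t unfolding E_def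
        by (intro mult_left_mono) auto
      also have "\<dots> = K * norm y" using False x0(2) unfolding t_def K_def by (simp add: field_simps)
      finally show "norm (f ((1/t) *\<^sub>R z')) \<le> K * norm y" .
      have "y - (1/t) *\<^sub>R z' = (1/t) *\<^sub>R (t *\<^sub>R y - z')" using t by (simp add: algebra_simps)
      then have "norm (y - (1/t) *\<^sub>R z') = (1/t) * dist z' (t *\<^sub>R y)"
        using t by (simp add: dist_norm norm_minus_commute)
      also have "\<dots> < (1/t) * (\<epsilon> * t)" using z'(2) t by (intro mult_strict_left_mono) auto
      also have "\<dots> = \<epsilon>" using t by simp
      finally show "norm (y - (1/t) *\<^sub>R z') < \<epsilon>" .
    qed
  qed
  have main: "norm (f x) \<le> 2 * K * norm x" if xV: "x \<in> V" for x
  proof (cases "x = 0")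
    case True then show ?thesis using f0 by simp
  next
    case False
    have "\<forall>y\<in>V. \<forall>k::nat. \<exists>z. z\<in>V \<and> norm (f z) \<le> K * norm y \<and> norm (y - z) < norm x / 2^Suc k"
    proof (intro ballI allI)
      fix y k assume "y \<in> V"
      have "norm x / 2^Suc k > 0" using False by simp
      then show "\<exists>z. z\<in>V \<and> norm (f z) \<le> K * norm y \<and> norm (y - z) < norm x / 2^Suc k"
        using key[OF \<open>y \<in> V\<close>] by blast
    qed
    define g where "g y k = (SOME z. z\<in>V \<and> norm (f z) \<le> K * norm y \<and> norm (y - z) < norm x / 2^Suc k)" for y k
    have g: "g y k \<in> V \<and> norm (f (g y k)) \<le> K * norm y \<and> norm (y - g y k) < norm x / 2^Suc k" if "y \<in> V" for y k
      unfolding g_def by (rule someI_ex) (use that \<open>\<forall>y\<in>V. \<forall>k::nat. \<exists>z. _\<close> in blast)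
    define e where "e = rec_nat x (\<lambda>k ek. ek - g ek k)"
    have e0: "e 0 = x" and eS: "e (Suc k) = e k - g (e k) k" for k by (simp_all add: e_def)
    have eV: "e k \<in> V \<and> norm (e k) \<le> norm x / 2^k" for k
    proof (induction k)
      case 0 then show ?case using e0 xV by simp
    next
      case (Suc k)
      then have ek: "e k \<in> V" by blast
      have "e k - g (e k) k \<in> V" using g[OF ek, of k] Vd[OF ek] by blast
      moreover have "norm (e k - g (e k) k) \<le> norm x / 2^Suc k" using g[OF ek, of k] by linarith
      ultimately show ?case unfolding eS by blast
    qed
    define z where "z k = g (e k) k" for k
    have gz: "z k \<in> V \<and> norm (f (z k)) \<le> K * norm (e k)" for k
      unfolding z_def using g[OF conjunct1[OF eV[of k]], of k] by blast
    have zV: "z k \<in> V" for k using gz by blast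
    have fz: "norm (f (z k)) \<le> (K * norm x) * (1/2)^k" for k
    proof -
      have "norm (f (z k)) \<le> K * norm (e k)" using gz by blast
      also have "\<dots> \<le> K * (norm x / 2^k)" using eV K0 by (intro mult_left_mono) auto
      finally show ?thesis by (simp add: power_divide)
    qed
    have psum: "(\<Sum>k<N. z k) = x - e N" for N
      by (induction N) (simp_all add: e0 eS z_def)
    have psV: "(\<Sum>k<N. z k) \<in> V \<and> f (\<Sum>k<N. z k) = (\<Sum>k<N. f (z k))" for N
      by (induction N) (simp_all add: V(2) f0 zV V(3) f(1))
    have "e \<longlonglongrightarrow> 0"
    proof (rule tendsto_norm_zero_cancel, rule Lim_null_comparison)
      show "\<forall>\<^sub>F k in sequentially. norm (norm (e k)) \<le> norm x * (1/2)^k"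
        using eV by (simp add: power_divide)
      show "(\<lambda>k. norm x * (1/2::real)^k) \<longlonglongrightarrow> 0"
        by (intro tendsto_mult_right_zero LIMSEQ_power_zero) auto
    qed
    then have s1: "(\<lambda>N. \<Sum>k<N. z k) \<longlonglongrightarrow> x"
      unfolding psum using tendsto_diff[of "\<lambda>_. x" x sequentially e 0] by simp
    have sg: "summable (\<lambda>k. (K * norm x) * (1/2::real)^k)"
      by (intro summable_mult summable_geometric) auto
    have sf: "summable (\<lambda>k. f (z k))"
      by (rule summable_comparison_test'[OF sg fz])
    have s2: "(\<lambda>N. f (\<Sum>k<N. z k)) \<longlonglongrightarrow> suminf (\<lambda>k. f (z k))"
      using summable_LIMSEQ[OF sf] psV by simp
    define sq where "sq N = ((\<Sum>k<N. z k), f (\<Sum>k<N. z k))" for N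
    have mem: "\<forall>N. sq N \<in> (\<lambda>x. (x, f x)) ` V"
      unfolding sq_def using psV by (intro allI image_eqI[of _ _ "\<Sum>k<_. z k"]) auto
    have lim: "sq \<longlonglongrightarrow> (x, suminf (\<lambda>k. f (z k)))"
      unfolding sq_def by (rule tendsto_Pair[OF s1 s2])
    have CS: "\<And>x l. (\<forall>n. x n \<in> (\<lambda>x. (x, f x)) ` V) \<and> x \<longlonglongrightarrow> l \<longrightarrow> l \<in> (\<lambda>x. (x, f x)) ` V"
      using G unfolding closed_sequential_limits by blast
    have "(x, suminf (\<lambda>k. f (z k))) \<in> (\<lambda>x. (x, f x)) ` V"
      using CS[of sq] mem lim by blast
    then have L: "f x = suminf (\<lambda>k. f (z k))" by (auto simp: image_iff)
    have "norm (suminf (\<lambda>k. f (z k))) \<le> suminf (\<lambda>k. (K * norm x) * (1/2::real)^k)"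
      by (rule norm_suminf_le[OF fz sg])
    also have "\<dots> = 2 * K * norm x"
      using suminf_geometric[of "1/2::real"] suminf_mult[of "\<lambda>k. (1/2::real)^k" "K * norm x"]
      by simp
    finally show ?thesis using L by simp
  qed
  show ?thesis by (rule exI[of _ "2 * K"]) (use main in blast)
qed

lemma graph_swap_closed:
  fixes W :: "'a::topological_space \<Rightarrow> 'b::topological_space"
  assumes "closed ((\<lambda>x. (x, W x)) ` D)"
  shows "closed ((\<lambda>p. (snd p, fst p)) -` ((\<lambda>x. (x, W x)) ` D))"
proof -
  have "continuous_on UNIV (\<lambda>p::'b \<times> 'a. (snd p, fst p))" by (intro continuous_intros)
  then show ?thesis using closed_vimage assms by blast
qed

context
  fixes D :: "'a::complex_banach set" and W :: "'a \<Rightarrow> 'b::complex_banach"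
  assumes lin: "linear_op D W" and cl: "closed_op D W"
begin

lemma bb_imp:
  assumes c: "c > 0" "\<And>x. x \<in> D \<Longrightarrow> c * norm x \<le> norm (W x)"
  shows "inj_on W D \<and> closed (W ` D)"
proof
  show "inj_on W D"
  proof (rule inj_onI)
    fix x y assume xy: "x \<in> D" "y \<in> D" "W x = W y"
    have "c * norm (x - y) \<le> norm (W (x - y))" using c(2) lo_diff[OF lin xy(1,2)] .
    also have "W (x - y) = 0" using lo_Tdiff[OF lin xy(1,2)] xy(3) by simp
    finally show "x = y" using c(1) by (simp add: mult_le_0_iff)
  qed
  show "closed (W ` D)"
  proof (unfold closed_sequential_limits, intro allI impI, elim conjE)
    fix y l assume yin: "\<forall>n. y n \<in> W ` D" and yl: "y \<longlonglongrightarrow> l"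
    define u where "u n = inv_into D W (y n)" for n
    have uD: "u n \<in> D" and Wu: "W (u n) = y n" for n
      using yin by (auto simp: u_def inv_into_into f_inv_into_f)
    have "Cauchy u"
    proof (unfold Cauchy_def, intro allI impI)
      fix e :: real assume "e > 0"
      obtain M where M: "\<forall>m\<ge>M. \<forall>n\<ge>M. dist (y m) (y n) < e * c"
        using LIMSEQ_imp_Cauchy[OF yl] \<open>e > 0\<close> c(1) unfolding Cauchy_def by (meson mult_pos_pos)
      have "dist (u m) (u n) < e" if "m \<ge> M" "n \<ge> M" for m n
      proof -
        have "c * dist (u m) (u n) \<le> norm (W (u m - u n))"
          using c(2)[OF lo_diff[OF lin uD uD]] by (simp add: dist_norm)
        also have "\<dots> = dist (y m) (y n)" using lo_Tdiff[OF lin uD uD] Wu by (simp add: dist_norm)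
        also have "\<dots> < e * c" using M that by blast
        finally show ?thesis using c(1) by (simp add: mult.commute)
      qed
      then show "\<exists>M. \<forall>m\<ge>M. \<forall>n\<ge>M. dist (u m) (u n) < e" by blast
    qed
    then obtain x where ux: "u \<longlonglongrightarrow> x" using convergent_eq_Cauchy by blast
    have "(x, l) \<in> (\<lambda>x. (x, W x)) ` D"
      using cl unfolding closed_op_def closed_sequential_limits
      by (rule allE[where x="\<lambda>n. (u n, y n)"], elim allE[where x="(x,l)"])
         (use uD Wu tendsto_Pair[OF ux yl] in force)
    then show "l \<in> W ` D" by auto
  qed
qed

lemma imp_bb:
  assumes inj: "inj_on W D" and clr: "closed (W ` D)"
  shows "\<exists>c>0. \<forall>x\<in>D. c * norm x \<le> norm (W x)"
proof -
  define f where "f = inv_into D W"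
  have ff: "f (W x) = x" if "x \<in> D" for x using inj that by (simp add: f_def)
  have "\<exists>C. \<forall>y\<in>W ` D. norm (f y) \<le> C * norm y"
  proof (rule closed_graph_bounded[OF clr])
    show "0 \<in> W ` D" using lo_0[OF lin] lo_T0[OF lin] by force
    show "y1 + y2 \<in> W ` D" if a12: "y1 \<in> W ` D" "y2 \<in> W ` D" for y1 y2
    proof -
      obtain x1 x2 where x: "x1 \<in> D" "x2 \<in> D" "y1 = W x1" "y2 = W x2" using a12 by blast
      show ?thesis by (rule image_eqI[of _ _ "x1 + x2"]) (use x lo_add[OF lin] lo_Tadd[OF lin] in auto)
    qed
    show "r *\<^sub>R y \<in> W ` D" if a1: "y \<in> W ` D" for r y
    proof -
      obtain x where x: "x \<in> D" "y = W x" using a1 by blast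
      show ?thesis by (rule image_eqI[of _ _ "r *\<^sub>R x"]) (use x lo_scaleR[OF lin] lo_TscaleR[OF lin] in auto)
    qed
    show "f (y1 + y2) = f y1 + f y2" if a12: "y1 \<in> W ` D" "y2 \<in> W ` D" for y1 y2
    proof -
      obtain x1 x2 where x: "x1 \<in> D" "x2 \<in> D" "y1 = W x1" "y2 = W x2" using a12 by blast
      have "y1 + y2 = W (x1 + x2)" using x lo_Tadd[OF lin x(1,2)] by simp
      then have "f (y1 + y2) = x1 + x2" using ff[OF lo_add[OF lin x(1,2)]] by simp
      then show ?thesis using x ff by simp
    qed
    show "f (r *\<^sub>R y) = r *\<^sub>R f y" if a1: "y \<in> W ` D" for r y
    proof -
      obtain x where x: "x \<in> D" "y = W x" using a1 by blast
      have "r *\<^sub>R y = W (r *\<^sub>R x)" using x lo_TscaleR[OF lin x(1)] by simp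
      then have "f (r *\<^sub>R y) = r *\<^sub>R x" using ff[OF lo_scaleR[OF lin x(1)]] by simp
      then show ?thesis using x ff by simp
    qed
    have "(\<lambda>y. (y, f y)) ` (W ` D) = (\<lambda>p. (snd p, fst p)) -` ((\<lambda>x. (x, W x)) ` D)"
    proof (intro set_eqI iffI)
      fix p assume "p \<in> (\<lambda>y. (y, f y)) ` (W ` D)"
      then show "p \<in> (\<lambda>p. (snd p, fst p)) -` ((\<lambda>x. (x, W x)) ` D)" using ff by auto
    next
      fix p assume "p \<in> (\<lambda>p. (snd p, fst p)) -` ((\<lambda>x. (x, W x)) ` D)"
      then obtain x where "x \<in> D" "p = (W x, x)" by (cases p) auto
      then show "p \<in> (\<lambda>y. (y, f y)) ` (W ` D)" using ff by auto
    qed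
    then show "closed ((\<lambda>y. (y, f y)) ` (W ` D))"
      using graph_swap_closed cl unfolding closed_op_def by metis
  qed
  then obtain C where C: "\<And>x. x \<in> D \<Longrightarrow> norm x \<le> C * norm (W x)" using ff by force
  show ?thesis
  proof (intro exI[of _ "1 / (\<bar>C\<bar> + 1)"] conjI ballI)
    show "1 / (\<bar>C\<bar> + 1) > 0" by simp
    fix x assume "x \<in> D"
    have "norm x \<le> (\<bar>C\<bar> + 1) * norm (W x)"
      using C[OF \<open>x \<in> D\<close>] by (smt (verit, best) mult_right_mono norm_ge_zero)
    then show "1 / (\<bar>C\<bar> + 1) * norm x \<le> norm (W x)"
      by (simp add: field_simps)
  qed
qed

end

lemma ap_bb:
  assumes lin: "linear_op D S"
  shows "l \<notin> ap_spectrum D S \<longleftrightarrow> (\<exists>c>0. \<forall>x\<in>D. c * norm x \<le> norm (shift S l x))"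
proof
  assume "\<exists>c>0. \<forall>x\<in>D. c * norm x \<le> norm (shift S l x)"
  then obtain c where c: "c > 0" "\<And>x. x\<in>D \<Longrightarrow> c * norm x \<le> norm (shift S l x)" by blast
  show "l \<notin> ap_spectrum D S"
  proof
    assume "l \<in> ap_spectrum D S"
    then obtain x where x: "\<And>n. x n \<in> D \<and> norm (x n) = 1" "(\<lambda>n. shift S l (x n)) \<longlonglongrightarrow> 0"
      unfolding ap_spectrum_def by blast
    have "\<forall>\<^sub>F n in sequentially. norm (shift S l (x n)) < c"
      using x(2) c(1) unfolding tendsto_iff by (simp add: dist_norm)
    then obtain n where "norm (shift S l (x n)) < c" using eventually_sequentially by auto
    moreover have "c \<le> norm (shift S l (x n))" using c(2)[of "x n"] x(1)[of n] by simp
    ultimately show False by simp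
  qed
next
  assume nap: "l \<notin> ap_spectrum D S"
  show "\<exists>c>0. \<forall>x\<in>D. c * norm x \<le> norm (shift S l x)"
  proof (rule ccontr)
    assume "\<not> ?thesis"
    then have H: "\<forall>n::nat. \<exists>x\<in>D. norm (shift S l x) < (1 / real (Suc n)) * norm x"
      by (metis not_le of_nat_0_less_iff zero_less_Suc zero_less_divide_1_iff)
    define u where "u n = (SOME x. x\<in>D \<and> norm (shift S l x) < (1 / real (Suc n)) * norm x)" for n
    have u: "u n \<in> D \<and> norm (shift S l (u n)) < (1 / real (Suc n)) * norm (u n)" for n
      unfolding u_def by (rule someI_ex) (use H in blast)
    have un: "u n \<noteq> 0" for n using u[of n] by auto
    have linS: "linear_op D (shift S l)" by (rule linear_op_shift[OF lin])
    define x where "x n = (1 / norm (u n)) *\<^sub>R u n" for n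
    have xD: "x n \<in> D \<and> norm (x n) = 1" for n
      using lo_scaleR[OF linS] u un by (simp add: x_def)
    have xs: "norm (shift S l (x n)) < 1 / real (Suc n)" for n
    proof -
      have "norm (shift S l (x n)) = norm (shift S l (u n)) / norm (u n)"
        unfolding x_def using lo_TscaleR[OF linS] u by simp
      also have "\<dots> < 1 / real (Suc n)" using u[of n] un by (simp add: divide_simps)
      finally show ?thesis .
    qed
    have "(\<lambda>n. shift S l (x n)) \<longlonglongrightarrow> 0"
    proof (rule tendsto_norm_zero_cancel, rule Lim_null_comparison)
      show "\<forall>\<^sub>F n in sequentially. norm (norm (shift S l (x n))) \<le> 1 / real (Suc n)"
        using xs by (simp add: less_imp_le)
      show "(\<lambda>n. 1 / real (Suc n)) \<longlonglongrightarrow> 0" using LIMSEQ_inverse_real_of_nat by (simp add: inverse_eq_divide)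
    qed
    then have "l \<in> ap_spectrum D S" unfolding ap_spectrum_def using xD by blast
    then show False using nap by blast
  qed
qed

lemma ap_char:
  assumes lin: "linear_op D S" and cl: "closed_op D (shift S l)"
  shows "l \<notin> ap_spectrum D S \<longleftrightarrow> inj_on (shift S l) D \<and> closed (op_range D (shift S l))"
  unfolding ap_bb[OF lin] op_range_def
  using bb_imp[OF linear_op_shift[OF lin] cl] imp_bb[OF linear_op_shift[OF lin] cl] by blast

lemma res_char:
  assumes lin: "linear_op D S" and cl: "closed_op D (shift S l)"
  shows "l \<in> resolvent_set D S \<longleftrightarrow> bij_betw (shift S l) D UNIV"
proof
  assume "l \<in> resolvent_set D S" then show "bij_betw (shift S l) D UNIV" unfolding resolvent_set_def by blast
next
  assume b: "bij_betw (shift S l) D UNIV"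
  then have "inj_on (shift S l) D" "closed (shift S l ` D)" by (auto simp: bij_betw_def)
  then obtain c where c: "c > 0" "\<forall>x\<in>D. c * norm x \<le> norm (shift S l x)"
    using imp_bb[OF linear_op_shift[OF lin] cl] by blast
  have "norm (inv_into D (shift S l) z) \<le> (1/c) * norm z" for z
  proof -
    have "inv_into D (shift S l) z \<in> D" using b by (metis bij_betw_imp_surj_on inv_into_into UNIV_I)
    then have "c * norm (inv_into D (shift S l) z) \<le> norm z"
      using c(2) bij_betw_inv_into_right[OF b] by force
    then show ?thesis using c(1) by (simp add: field_simps mult.commute)
  qed
  then show "l \<in> resolvent_set D S" unfolding resolvent_set_def using b by blast
qed

lemma range_subspace:
  assumes "linear_op D W"
  shows "cvs.subspace (W ` D)"
  unfolding cvs.subspace_def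
proof (intro conjI ballI allI)
  show "0 \<in> W ` D" using lo_0[OF assms] lo_T0[OF assms] by (metis imageI)
next
  fix x y assume "x \<in> W ` D" "y \<in> W ` D"
  then obtain a b where ab: "a \<in> D" "b \<in> D" "x = W a" "y = W b" by blast
  show "x + y \<in> W ` D" by (rule image_eqI[of _ _ "a + b"]) (use ab lo_add[OF assms] lo_Tadd[OF assms] in auto)
next
  fix c x assume "x \<in> W ` D"
  then obtain a where a: "a \<in> D" "x = W a" by blast
  show "c *\<^sub>C x \<in> W ` D" by (rule image_eqI[of _ _ "c *\<^sub>C a"]) (use a lo_scale[OF assms] lo_Tscale[OF assms] in auto)
qed

lemma closure_maps:
  fixes f :: "'a::real_normed_vector \<Rightarrow> 'b::real_normed_vector"
  assumes "continuous_on UNIV f" "f ` V \<subseteq> closure W"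
  shows "f ` closure V \<subseteq> closure W"
  by (rule image_closure_subset) (use assms continuous_on_subset[OF assms(1)] in auto)

lemma closure_subspace:
  fixes V :: "'a::complex_banach set"
  assumes "cvs.subspace V"
  shows "cvs.subspace (closure V)"
proof -
  have add1: "(\<lambda>b. a + b) ` closure V \<subseteq> closure V" if "a \<in> V" for a
  proof (rule closure_maps)
    show "continuous_on UNIV (\<lambda>b. a + b)" by (intro continuous_intros)
    have "(\<lambda>b. a + b) ` V \<subseteq> V" using assms that cvs.subspace_add by blast
    then show "(\<lambda>b. a + b) ` V \<subseteq> closure V" using closure_subset by blast
  qed
  have add2: "(\<lambda>a. a + b) ` closure V \<subseteq> closure V" if "b \<in> closure V" for b
    by (rule closure_maps) (use add1 that in \<open>auto intro: continuous_intros\<close>)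
  have sc: "(\<lambda>a. c *\<^sub>C a) ` closure V \<subseteq> closure V" for c
  proof (rule closure_maps)
    show "continuous_on UNIV (\<lambda>a. c *\<^sub>C a)" by (intro continuous_intros)
    have "(\<lambda>a. c *\<^sub>C a) ` V \<subseteq> V" using assms cvs.subspace_scale by blast
    then show "(\<lambda>a. c *\<^sub>C a) ` V \<subseteq> closure V" using closure_subset by blast
  qed
  show ?thesis unfolding cvs.subspace_def
    using add2 sc closure_subset cvs.subspace_0[OF assms] by blast
qed

lemma comp_bounded:
  fixes C :: "'y::complex_banach \<Rightarrow> 'z::complex_banach" and P :: "'x::complex_banach \<Rightarrow> 'y"
  assumes linC: "linear_op DC C" and clC: "closed_op DC C" and P: "bounded_linear P" and PD: "\<And>x. P x \<in> DC"
  shows "bounded_linear (\<lambda>x. C (P x))"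
proof -
  have add: "C (P (x + y)) = C (P x) + C (P y)" for x y
    using lo_Tadd[OF linC PD PD] linear_add[OF bounded_linear.linear[OF P]] by simp
  have sc: "C (P (r *\<^sub>R x)) = r *\<^sub>R C (P x)" for r x
    using lo_TscaleR[OF linC PD] linear_scale[OF bounded_linear.linear[OF P]] by simp
  have "\<exists>K. \<forall>x\<in>UNIV. norm (C (P x)) \<le> K * norm x"
  proof (rule closed_graph_bounded)
    have "(\<lambda>x. (x, C (P x))) ` UNIV = (\<lambda>p. (P (fst p), snd p)) -` ((\<lambda>x. (x, C x)) ` DC)"
      using PD by auto
    moreover have "closed ((\<lambda>p. (P (fst p), snd p)) -` ((\<lambda>x. (x, C x)) ` DC))"
    proof -
      have "continuous_on UNIV (\<lambda>p::'x \<times> 'z. (P (fst p), snd p))"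
        by (intro continuous_intros bounded_linear.continuous_on[OF P])
      then show ?thesis using closed_vimage clC unfolding closed_op_def by blast
    qed
    ultimately show "closed ((\<lambda>x. (x, C (P x))) ` UNIV)" by simp
  qed (use add sc in auto)
  then obtain K where K: "\<And>x. norm (C (P x)) \<le> K * norm x" by blast
  show ?thesis
    by (rule bounded_linear_intro[of _ K]) (use add sc K in \<open>auto simp: mult.commute\<close>)
qed

lemma inj_ker:
  assumes "linear_op D W"
  shows "inj_on W D \<longleftrightarrow> (\<forall>x\<in>D. W x = 0 \<longrightarrow> x = 0)"
proof
  assume "inj_on W D" then show "\<forall>x\<in>D. W x = 0 \<longrightarrow> x = 0"
    using lo_0[OF assms] lo_T0[OF assms] by (metis inj_onD)
next
  assume H: "\<forall>x\<in>D. W x = 0 \<longrightarrow> x = 0"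
  show "inj_on W D"
  proof (rule inj_onI)
    fix x y assume "x \<in> D" "y \<in> D" "W x = W y"
    then have "W (x - y) = 0" using lo_Tdiff[OF assms] by simp
    then have "x - y = 0" using H lo_diff[OF assms \<open>x \<in> D\<close> \<open>y \<in> D\<close>] by blast
    then show "x = y" by simp
  qed
qed

lemma shift_eq: "shift S l x = shift S m x + (m - l) *\<^sub>C x"
  unfolding shift_def by (simp add: scaleC_diff_left algebra_simps)

locale resop =
  fixes D :: "'a::complex_banach set" and S :: "'a \<Rightarrow> 'a" and \<mu> :: complex
  assumes lin: "linear_op D S" and res: "\<mu> \<in> resolvent_set D S"
begin

definition Q where "Q = inv_into D (shift S \<mu>)"

lemma bij: "bij_betw (shift S \<mu>) D UNIV" using res unfolding resolvent_set_def by blast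

lemma QD: "Q x \<in> D"
  unfolding Q_def using bij by (metis bij_betw_def inv_into_into UNIV_I)

lemma SQ: "shift S \<mu> (Q x) = x"
  unfolding Q_def using bij_betw_inv_into_right[OF bij] by simp

lemma QS: "p \<in> D \<Longrightarrow> Q (shift S \<mu> p) = p"
  unfolding Q_def using bij by (simp add: bij_betw_def)

lemma linS: "linear_op D (shift S l)" by (rule linear_op_shift[OF lin])

lemma Qadd: "Q (x + y) = Q x + Q y"
proof -
  have "Q (x + y) = Q (shift S \<mu> (Q x + Q y))"
    using lo_Tadd[OF linS QD QD] by (simp add: SQ)
  also have "\<dots> = Q x + Q y" using QS lo_add[OF linS QD QD] by simp
  finally show ?thesis .
qed

lemma Qscale: "Q (c *\<^sub>C x) = c *\<^sub>C Q x"
proof -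
  have "Q (c *\<^sub>C x) = Q (shift S \<mu> (c *\<^sub>C Q x))"
    using lo_Tscale[OF linS QD] by (simp add: SQ)
  also have "\<dots> = c *\<^sub>C Q x" using QS lo_scale[OF linS QD] by simp
  finally show ?thesis .
qed

lemma Q_bl: "bounded_linear Q"
proof -
  obtain C where C: "\<And>z. norm (Q z) \<le> C * norm z"
    using res unfolding resolvent_set_def Q_def by blast
  show ?thesis
    by (rule bounded_linear_intro[of _ C]) (auto simp: Qadd scaleR_scaleC Qscale C mult.commute)
qed

lemma Q_cont: "continuous_on UNIV Q"
  using bounded_linear.continuous_on[OF Q_bl continuous_on_id] by simp

lemma linQ: "linear_op UNIV Q"
  unfolding linear_op_def csubspace_def by (simp add: Qadd Qscale)

lemma graph_closed: "closed_op D (shift S l)"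
proof -
  have G\<mu>: "(\<lambda>x. (x, shift S \<mu> x)) ` D = {p. fst p = Q (snd p)}"
  proof (intro set_eqI iffI)
    fix p assume "p \<in> (\<lambda>x. (x, shift S \<mu> x)) ` D" then show "p \<in> {p. fst p = Q (snd p)}" using QS by auto
  next
    fix p assume "p \<in> {p. fst p = Q (snd p)}"
    then have "p = (Q (snd p), shift S \<mu> (Q (snd p)))" by (cases p) (simp add: SQ)
    then show "p \<in> (\<lambda>x. (x, shift S \<mu> x)) ` D" using QD by (intro image_eqI[of _ _ "Q (snd p)"]) auto
  qed
  have cG\<mu>: "closed {p::'a\<times>'a. fst p = Q (snd p)}"
    by (rule closed_Collect_eq) (auto intro!: continuous_intros continuous_on_compose2[OF Q_cont])
  have "(\<lambda>x. (x, shift S l x)) ` D = (\<lambda>p. (fst p, snd p + (l - \<mu>) *\<^sub>C fst p)) -` {p. fst p = Q (snd p)}"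
  proof (intro set_eqI iffI)
    fix p assume "p \<in> (\<lambda>x. (x, shift S l x)) ` D"
    then obtain x where "x \<in> D" "p = (x, shift S l x)" by blast
    then show "p \<in> (\<lambda>p. (fst p, snd p + (l - \<mu>) *\<^sub>C fst p)) -` {p. fst p = Q (snd p)}"
    proof -
      have "shift S l x + (l - \<mu>) *\<^sub>C x = shift S \<mu> x" using shift_eq[of S \<mu> x l] by simp
      then show ?thesis using QS[OF \<open>x \<in> D\<close>] \<open>p = _\<close> by simp
    qed
  next
    fix p assume "p \<in> (\<lambda>p. (fst p, snd p + (l - \<mu>) *\<^sub>C fst p)) -` {p. fst p = Q (snd p)}"
    then have e: "fst p = Q (snd p + (l - \<mu>) *\<^sub>C fst p)" by simp
    then have "shift S \<mu> (fst p) = snd p + (l - \<mu>) *\<^sub>C fst p" by (metis SQ)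
    then have "snd p = shift S l (fst p)" using shift_eq[of S \<mu> "fst p" l] by (simp add: algebra_simps)
    moreover have "fst p \<in> D" using e QD by metis
    ultimately show "p \<in> (\<lambda>x. (x, shift S l x)) ` D"
      by (intro image_eqI[of _ _ "fst p"]) (auto simp: prod_eq_iff)
  qed
  moreover have "closed ((\<lambda>p. (fst p, snd p + (l - \<mu>) *\<^sub>C fst p)) -` {p::'a\<times>'a. fst p = Q (snd p)})"
    by (rule closed_vimage[OF cG\<mu>]) (intro continuous_intros)
  ultimately show ?thesis unfolding closed_op_def by simp
qed

lemma Q_comm: "p \<in> D \<Longrightarrow> Q (shift S l p) = shift S l (Q p)"
proof -
  assume p: "p \<in> D"
  have "Q (shift S l p) = Q (shift S \<mu> p + (\<mu> - l) *\<^sub>C p)" by (simp add: shift_eq[of S l p \<mu>])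
  also have "\<dots> = p + (\<mu> - l) *\<^sub>C Q p" by (simp add: Qadd Qscale QS p)
  also have "\<dots> = shift S l (Q p)" by (simp add: shift_eq[of S l "Q p" \<mu>] SQ)
  finally show ?thesis .
qed

lemma SQ_D: "p \<in> D \<Longrightarrow> S (Q p) \<in> D"
proof -
  assume p: "p \<in> D"
  have "S (Q p) = shift S \<mu> (Q p) + \<mu> *\<^sub>C Q p" unfolding shift_def by simp
  also have "\<dots> = p + \<mu> *\<^sub>C Q p" by (simp add: SQ)
  finally show ?thesis using p lo_add[OF lin] lo_scale[OF lin] QD by simp
qed

lemma decomp: "x = shift S l (Q x + (l - \<mu>) *\<^sub>C Q (Q x)) + (l - \<mu>)^2 *\<^sub>C Q (Q x)"
proof -
  have a: "shift S l (Q y) = y + (\<mu> - l) *\<^sub>C Q y" for y by (simp add: shift_eq[of S l "Q y" \<mu>] SQ)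
  have "shift S l (Q x + (l - \<mu>) *\<^sub>C Q (Q x)) = shift S l (Q x) + (l - \<mu>) *\<^sub>C shift S l (Q (Q x))"
    using lo_Tadd[OF linS QD lo_scale[OF lin QD]] lo_Tscale[OF linS QD] by simp
  also have "\<dots> = x + (\<mu> - l) *\<^sub>C Q x + (l - \<mu>) *\<^sub>C (Q x + (\<mu> - l) *\<^sub>C Q (Q x))" by (simp add: a)
  also have "\<dots> = x + ((\<mu> - l) *\<^sub>C Q x + (l - \<mu>) *\<^sub>C Q x) + ((l - \<mu>) * (\<mu> - l)) *\<^sub>C Q (Q x)"
    by (simp add: scaleC_add_right scaleC_scaleC add.assoc)
  also have "(\<mu> - l) *\<^sub>C Q x + (l - \<mu>) *\<^sub>C Q x = 0" by (simp flip: scaleC_add_left)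
  also have "(l - \<mu>) * (\<mu> - l) = - ((l - \<mu>)^2)" by (simp add: power2_eq_square algebra_simps)
  also have "x + 0 + (- ((l - \<mu>)^2)) *\<^sub>C Q (Q x) = x - (l - \<mu>)^2 *\<^sub>C Q (Q x)"
    by (simp add: scaleC_minus_left)
  finally show ?thesis by simp
qed

end

locale pair =
  fixes DA :: "'x::complex_banach set" and A :: "'x \<Rightarrow> 'y::complex_banach"
    and DB :: "'y set" and B :: "'y \<Rightarrow> 'x" and \<mu> \<nu> :: complex
  assumes linA: "linear_op DA A" and clA: "closed_op DA A"
    and linB: "linear_op DB B" and clB: "closed_op DB B"
    and resT: "\<mu> \<in> resolvent_set (prod_dom DB B DA) (A \<circ> B)"
    and resS: "\<nu> \<in> resolvent_set (prod_dom DA A DB) (B \<circ> A)"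
begin

sublocale T: resop "prod_dom DB B DA" "A \<circ> B" \<mu>
  by unfold_locales (use linear_op_prod[OF linA linB] resT in auto)

sublocale S: resop "prod_dom DA A DB" "B \<circ> A" \<nu>
  by unfold_locales (use linear_op_prod[OF linB linA] resS in auto)

abbreviation "D1 \<equiv> prod_dom DB B DA"
abbreviation "D2 \<equiv> prod_dom DA A DB"

lemma D1: "u \<in> D1 \<longleftrightarrow> u \<in> DB \<and> B u \<in> DA" unfolding prod_dom_def by simp
lemma D2: "q \<in> D2 \<longleftrightarrow> q \<in> DA \<and> A q \<in> DB" unfolding prod_dom_def by simp

lemma inter_A:
  assumes q: "q \<in> D2" and h: "B (A q) \<in> DA"
  shows "A q \<in> D1 \<and> A (shift (B \<circ> A) l q) = shift (A \<circ> B) l (A q)"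
proof
  show "A q \<in> D1" using q h D1 D2 by blast
  have "q \<in> DA" using q D2 by blast
  then show "A (shift (B \<circ> A) l q) = shift (A \<circ> B) l (A q)"
    unfolding shift_def using lo_Tdiff[OF linA h lo_scale[OF linA]] lo_Tscale[OF linA] by simp
qed

lemma inter_B:
  assumes u: "u \<in> D1" and h: "A (B u) \<in> DB"
  shows "B u \<in> D2 \<and> B (shift (A \<circ> B) l u) = shift (B \<circ> A) l (B u)"
proof
  show "B u \<in> D2" using u h D1 D2 by blast
  have "u \<in> DB" using u D1 by blast
  then show "B (shift (A \<circ> B) l u) = shift (B \<circ> A) l (B u)"
    unfolding shift_def using lo_Tdiff[OF linB h lo_scale[OF linB]] lo_Tscale[OF linB] by simp
qed

lemma ker_map:
  assumes l: "l \<noteq> 0" and x: "x \<in> D2" and k: "shift (B \<circ> A) l x = 0"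
  shows "(1/l) *\<^sub>C A x \<in> D1 \<and> shift (A \<circ> B) l ((1/l) *\<^sub>C A x) = 0 \<and> B ((1/l) *\<^sub>C A x) = x"
proof -
  have BA: "B (A x) = l *\<^sub>C x" using k unfolding shift_def by simp
  have xA: "x \<in> DA" and AxB: "A x \<in> DB" using x D2 by auto
  have AxD1: "A x \<in> D1" using AxB BA lo_scale[OF linA xA] D1 by simp
  then have uD1: "(1/l) *\<^sub>C A x \<in> D1" using lo_scale[OF T.lin] by blast
  have Bu: "B ((1/l) *\<^sub>C A x) = x"
    using lo_Tscale[OF linB AxB] BA l by (simp add: scaleC_scaleC scaleC_one)
  have "shift (A \<circ> B) l ((1/l) *\<^sub>C A x) = A x - l *\<^sub>C ((1/l) *\<^sub>C A x)"
    unfolding shift_def using Bu by simp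
  also have "\<dots> = 0" using l by (simp add: scaleC_scaleC scaleC_one)
  finally show ?thesis using uD1 Bu by blast
qed

lemma inj_transfer:
  assumes l: "l \<noteq> 0" and inj: "inj_on (shift (A \<circ> B) l) D1"
  shows "inj_on (shift (B \<circ> A) l) D2"
  unfolding inj_ker[OF S.linS]
proof (intro ballI impI)
  fix x assume x: "x \<in> D2" and k: "shift (B \<circ> A) l x = 0"
  note km = ker_map[OF l x k]
  have "(1/l) *\<^sub>C A x = 0" using inj km lo_0[OF T.lin] lo_T0[OF T.linS] unfolding inj_ker[OF T.linS] by blast
  then show "x = 0" using km lo_T0[OF linB] by metis
qed

lemma findim_transfer:
  assumes l: "l \<noteq> 0" and fd: "finite_dimensional (op_kernel D1 (shift (A \<circ> B) l))"
  shows "finite_dimensional (op_kernel D2 (shift (B \<circ> A) l))"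
proof -
  let ?K = "op_kernel D1 (shift (A \<circ> B) l)"
  obtain F where F: "finite F" "?K \<subseteq> cvs.span F" using fd unfolding finite_dimensional_alt by blast
  obtain G where G: "G \<subseteq> ?K" "cvs.independent G" "?K \<subseteq> cvs.span G" "card G = cvs.dim ?K"
    by (rule cvs.basis_exists)
  have "G \<subseteq> cvs.span F" using G(1) F(2) by (rule order_trans)
  then have fG: "finite G" using cvs.independent_span_bound[OF F(1) G(2)] by blast
  have GB: "G \<subseteq> DB" using G(1) unfolding op_kernel_def prod_dom_def by auto
  have "op_kernel D2 (shift (B \<circ> A) l) \<subseteq> cvs.span (B ` G)"
  proof
    fix x assume "x \<in> op_kernel D2 (shift (B \<circ> A) l)"
    then have x: "x \<in> D2" "shift (B \<circ> A) l x = 0" unfolding op_kernel_def by auto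
    note km = ker_map[OF l x]
    have "(1/l) *\<^sub>C A x \<in> ?K" using km unfolding op_kernel_def by simp
    then have "(1/l) *\<^sub>C A x \<in> cvs.span G" using G(3) by blast
    then obtain t r where t: "finite t" "t \<subseteq> G" "(1/l) *\<^sub>C A x = (\<Sum>a\<in>t. r a *\<^sub>C a)"
      unfolding cvs.span_explicit by blast
    have "x = B (\<Sum>a\<in>t. r a *\<^sub>C a)" using km t(3) by simp
    also have "\<dots> = (\<Sum>a\<in>t. r a *\<^sub>C B a)" using lo_sum[OF linB t(1)] t(2) GB by blast
    also have "\<dots> \<in> cvs.span (B ` G)"
      by (rule cvs.span_sum, rule cvs.span_scale, rule cvs.span_base) (use t(2) in blast)
    finally show "x \<in> cvs.span (B ` G)" .
  qed
  then show ?thesis unfolding finite_dimensional_alt using fG by blast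
qed

definition P where "P y = B (T.Q y)"
definition M where "M x = A (S.Q x)"

lemma QD1: "T.Q y \<in> DB" using T.QD D1 by blast
lemma QD2: "S.Q x \<in> DA" using S.QD D2 by blast

lemma P_bl: "bounded_linear P"
  unfolding P_def by (rule comp_bounded[OF linB clB T.Q_bl QD1])
lemma M_bl: "bounded_linear M"
  unfolding M_def by (rule comp_bounded[OF linA clA S.Q_bl QD2])

lemma P_cont: "continuous_on UNIV P"
  using bounded_linear.continuous_on[OF P_bl continuous_on_id] by simp
lemma M_cont: "continuous_on UNIV M"
  using bounded_linear.continuous_on[OF M_bl continuous_on_id] by simp

lemma linP: "linear_op UNIV P"
  unfolding linear_op_def csubspace_def P_def
  using lo_Tadd[OF linB QD1 QD1] lo_Tscale[OF linB QD1] by (simp add: T.Qadd T.Qscale)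

lemma P_ran: "u \<in> D1 \<Longrightarrow> P (shift (A \<circ> B) l u) = shift (B \<circ> A) l (B (T.Q u)) \<and> B (T.Q u) \<in> D2"
proof -
  assume u: "u \<in> D1"
  have h: "A (B (T.Q u)) \<in> DB" using T.SQ_D[OF u] D1 by simp
  show ?thesis unfolding P_def T.Q_comm[OF u] using inter_B[OF T.QD h] by simp
qed

lemma M_ran: "p \<in> D2 \<Longrightarrow> M (shift (B \<circ> A) l p) = shift (A \<circ> B) l (A (S.Q p)) \<and> A (S.Q p) \<in> D1"
proof -
  assume p: "p \<in> D2"
  have h: "B (A (S.Q p)) \<in> DA" using S.SQ_D[OF p] D2 by simp
  show ?thesis unfolding M_def S.Q_comm[OF p] using inter_A[OF S.QD h] by simp
qed

lemma P_maps: "P ` (shift (A \<circ> B) l ` D1) \<subseteq> shift (B \<circ> A) l ` D2"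
  using P_ran by blast
lemma M_maps: "M ` (shift (B \<circ> A) l ` D2) \<subseteq> shift (A \<circ> B) l ` D1"
  using M_ran by blast
lemma Q_maps: "S.Q ` (shift (B \<circ> A) l ` D2) \<subseteq> shift (B \<circ> A) l ` D2"
  using S.Q_comm S.QD by blast

lemma subRS: "cvs.subspace (shift (B \<circ> A) l ` D2)" by (rule range_subspace[OF S.linS])

lemma core:
  assumes l: "l \<noteq> 0"
  shows "\<exists>p\<in>D2. x = shift (B \<circ> A) l p + ((l - \<nu>)^2 / l) *\<^sub>C B (A (S.Q (S.Q x)))"
proof -
  define z where "z = S.Q (S.Q x)"
  define p0 where "p0 = S.Q x + (l - \<nu>) *\<^sub>C S.Q (S.Q x)"
  have zD: "z \<in> D2" unfolding z_def by (rule S.QD)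
  have p0D: "p0 \<in> D2" unfolding p0_def using lo_add[OF S.lin S.QD lo_scale[OF S.lin S.QD]] .
  have x: "x = shift (B \<circ> A) l p0 + (l - \<nu>)^2 *\<^sub>C z" unfolding p0_def z_def by (rule S.decomp)
  have lz: "z = (1/l) *\<^sub>C B (A z) - (1/l) *\<^sub>C shift (B \<circ> A) l z"
    unfolding shift_def using l by (simp add: scaleC_diff_right scaleC_scaleC scaleC_one)
  define c where "c = (l - \<nu>)^2"
  have "x = shift (B \<circ> A) l p0 + c *\<^sub>C ((1/l) *\<^sub>C B (A z) - (1/l) *\<^sub>C shift (B \<circ> A) l z)"
    using x lz unfolding c_def by metis
  also have "\<dots> = shift (B \<circ> A) l p0 - (c / l) *\<^sub>C shift (B \<circ> A) l z + (c / l) *\<^sub>C B (A z)"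
    by (simp add: scaleC_diff_right scaleC_scaleC algebra_simps)
  also have "shift (B \<circ> A) l p0 - (c / l) *\<^sub>C shift (B \<circ> A) l z = shift (B \<circ> A) l (p0 - (c / l) *\<^sub>C z)"
    using lo_Tdiff[OF S.linS p0D lo_scale[OF S.lin zD]] lo_Tscale[OF S.linS zD] by simp
  finally have "x = shift (B \<circ> A) l (p0 - (c / l) *\<^sub>C z) + (c / l) *\<^sub>C B (A z)" .
  moreover have "p0 - (c / l) *\<^sub>C z \<in> D2" using lo_diff[OF S.lin p0D lo_scale[OF S.lin zD]] .
  ultimately show ?thesis unfolding c_def z_def by blast
qed

lemma BAz_P: "B (A (S.Q (S.Q x))) = P (shift (A \<circ> B) \<mu> (A (S.Q (S.Q x))))"
proof -
  have "A (S.Q (S.Q x)) \<in> D1" using M_ran[OF S.QD, of \<mu>] unfolding M_def by blast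
  then show ?thesis unfolding P_def using T.QS by simp
qed

lemma closed_transfer:
  assumes l: "l \<noteq> 0" and cl: "closed (op_range D1 (shift (A \<circ> B) l))"
  shows "closed (op_range D2 (shift (B \<circ> A) l))"
proof -
  let ?RS = "shift (B \<circ> A) l ` D2" and ?RT = "shift (A \<circ> B) l ` D1"
  have "closure ?RS \<subseteq> ?RS"
  proof
    fix x assume xc: "x \<in> closure ?RS"
    have "S.Q ` closure ?RS \<subseteq> closure ?RS"
      by (rule closure_maps[OF S.Q_cont]) (use Q_maps closure_subset in blast)
    then have x1: "S.Q x \<in> closure ?RS" using xc by blast
    have "M ` closure ?RS \<subseteq> closure ?RT"
      by (rule closure_maps[OF M_cont]) (use M_maps closure_subset in blast)
    then have "M (S.Q x) \<in> closure ?RT" using x1 by blast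
    then have "M (S.Q x) \<in> ?RT" using cl closure_closed unfolding op_range_def by metis
    then obtain u where u: "u \<in> D1" "A (S.Q (S.Q x)) = shift (A \<circ> B) l u" unfolding M_def by blast
    have AzD1: "A (S.Q (S.Q x)) \<in> D1" using M_ran[OF S.QD, of l] unfolding M_def by blast
    have "A (B u) = A (S.Q (S.Q x)) + l *\<^sub>C u" using u(2) unfolding shift_def by simp
    moreover have "A (S.Q (S.Q x)) + l *\<^sub>C u \<in> DB"
      using AzD1 u(1) D1 lo_add[OF linB] lo_scale[OF linB] by blast
    ultimately have "A (B u) \<in> DB" by simp
    note ib = inter_B[OF u(1) this, of l]
    have BAz: "B (A (S.Q (S.Q x))) \<in> ?RS" using ib u(2) by auto
    obtain p where p: "p \<in> D2" "x = shift (B \<circ> A) l p + ((l - \<nu>)^2 / l) *\<^sub>C B (A (S.Q (S.Q x)))"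
      using core[OF l] by blast
    have "shift (B \<circ> A) l p + ((l - \<nu>)^2 / l) *\<^sub>C B (A (S.Q (S.Q x))) \<in> ?RS"
      by (intro cvs.subspace_add[OF subRS] cvs.subspace_scale[OF subRS] BAz imageI p(1))
    then show "x \<in> ?RS" by (simp only: p(2)[symmetric])
  qed
  then show ?thesis unfolding op_range_def using closure_subset_eq by blast
qed

lemma dense_transfer:
  assumes l: "l \<noteq> 0" and d: "closure (op_range D1 (shift (A \<circ> B) l)) = UNIV"
  shows "closure (op_range D2 (shift (B \<circ> A) l)) = UNIV"
proof -
  let ?RS = "shift (B \<circ> A) l ` D2" and ?RT = "shift (A \<circ> B) l ` D1"
  have Pc: "P ` closure ?RT \<subseteq> closure ?RS"
    by (rule closure_maps[OF P_cont]) (use P_maps closure_subset in blast)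
  have sc: "cvs.subspace (closure ?RS)" by (rule closure_subspace[OF subRS])
  have "x \<in> closure ?RS" for x
  proof -
    obtain p where p: "p \<in> D2" "x = shift (B \<circ> A) l p + ((l - \<nu>)^2 / l) *\<^sub>C B (A (S.Q (S.Q x)))"
      using core[OF l] by blast
    have "B (A (S.Q (S.Q x))) \<in> closure ?RS" unfolding BAz_P using Pc d unfolding op_range_def by blast
    moreover have "shift (B \<circ> A) l p \<in> closure ?RS" by (rule subsetD[OF closure_subset]) (use p(1) in blast)
    ultimately have "shift (B \<circ> A) l p + ((l - \<nu>)^2 / l) *\<^sub>C B (A (S.Q (S.Q x))) \<in> closure ?RS"
      by (intro cvs.subspace_add[OF sc] cvs.subspace_scale[OF sc])
    then show ?thesis by (simp only: p(2)[symmetric])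
  qed
  then show ?thesis unfolding op_range_def by blast
qed

lemma codim_transfer:
  assumes l: "l \<noteq> 0" and F: "\<forall>y. \<exists>v\<in>op_range D1 (shift (A \<circ> B) l). y - v \<in> cvs.span F"
  shows "\<forall>x. \<exists>v\<in>op_range D2 (shift (B \<circ> A) l). x - v \<in> cvs.span (P ` F)"
proof
  fix x
  let ?RS = "shift (B \<circ> A) l ` D2"
  obtain p where p: "p \<in> D2" "x = shift (B \<circ> A) l p + ((l - \<nu>)^2 / l) *\<^sub>C B (A (S.Q (S.Q x)))"
    using core[OF l] by blast
  define w where "w = shift (A \<circ> B) \<mu> (A (S.Q (S.Q x)))"
  obtain v where v: "v \<in> op_range D1 (shift (A \<circ> B) l)" "w - v \<in> cvs.span F" using F by blast
  obtain u where u: "u \<in> D1" "v = shift (A \<circ> B) l u" using v(1) unfolding op_range_def by blast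
  have Pv: "P v \<in> ?RS" using P_ran[OF u(1), of l] u(2) by auto
  have Ps: "P (w - v) \<in> cvs.span (P ` F)"
  proof -
    obtain t r where t: "finite t" "t \<subseteq> F" "w - v = (\<Sum>a\<in>t. r a *\<^sub>C a)"
      using v(2) unfolding cvs.span_explicit by blast
    have "P (w - v) = (\<Sum>a\<in>t. r a *\<^sub>C P a)" using lo_sum[OF linP t(1)] t(3) by simp
    also have "\<dots> \<in> cvs.span (P ` F)"
      by (rule cvs.span_sum, rule cvs.span_scale, rule cvs.span_base) (use t(2) in blast)
    finally show ?thesis .
  qed
  have Pw: "P w = P v + P (w - v)" using lo_Tadd[OF linP, of v "w - v"] by simp
  let ?k = "(l - \<nu>)^2 / l"
  have "shift (B \<circ> A) l p + ?k *\<^sub>C B (A (S.Q (S.Q x))) = (shift (B \<circ> A) l p + ?k *\<^sub>C P v) + ?k *\<^sub>C P (w - v)"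
    unfolding BAz_P w_def[symmetric] Pw by (simp add: scaleC_add_right add.assoc)
  then have "x = (shift (B \<circ> A) l p + ?k *\<^sub>C P v) + ?k *\<^sub>C P (w - v)"
    by (simp only: p(2)[symmetric])
  moreover have "shift (B \<circ> A) l p + ?k *\<^sub>C P v \<in> ?RS"
    by (intro cvs.subspace_add[OF subRS] cvs.subspace_scale[OF subRS] Pv imageI p(1))
  moreover have "?k *\<^sub>C P (w - v) \<in> cvs.span (P ` F)" by (rule cvs.span_scale[OF Ps])
  ultimately show "\<exists>v\<in>op_range D2 (shift (B \<circ> A) l). x - v \<in> cvs.span (P ` F)"
    unfolding op_range_def by (intro bexI[of _ "shift (B \<circ> A) l p + ?k *\<^sub>C P v"]) auto
qed

lemma codim_transfer':
  assumes l: "l \<noteq> 0" and F: "finite_codim (op_range D1 (shift (A \<circ> B) l))"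
  shows "finite_codim (op_range D2 (shift (B \<circ> A) l))"
  using codim_transfer[OF l] F unfolding finite_codim_alt by blast

lemma surj_transfer:
  assumes l: "l \<noteq> 0" and F: "op_range D1 (shift (A \<circ> B) l) = UNIV"
  shows "op_range D2 (shift (B \<circ> A) l) = UNIV"
proof -
  have "\<forall>x. \<exists>v\<in>op_range D2 (shift (B \<circ> A) l). x - v \<in> cvs.span (P ` {})"
    by (rule codim_transfer[OF l]) (use F in auto)
  then show ?thesis by auto
qed

end

theorem theorem1p5:
  fixes DA :: "'x::complex_banach set" and A :: "'x \<Rightarrow> 'y::complex_banach"
    and DB :: "'y set" and B :: "'y \<Rightarrow> 'x"
  assumes "linear_op DA A" "closed_op DA A" "densely_defined DA"
    and "linear_op DB B" "closed_op DB B" "densely_defined DB"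
    and "resolvent_set (prod_dom DB B DA) (A \<circ> B) \<noteq> {}"
    and "resolvent_set (prod_dom DA A DB) (B \<circ> A) \<noteq> {}"
  shows "(\<forall>l. l \<noteq> 0 \<longrightarrow>
           (closed (op_range (prod_dom DB B DA) (shift (A \<circ> B) l))
              \<longleftrightarrow> closed (op_range (prod_dom DA A DB) (shift (B \<circ> A) l))) \<and>
           (closure (op_range (prod_dom DB B DA) (shift (A \<circ> B) l)) = UNIV
              \<longleftrightarrow> closure (op_range (prod_dom DA A DB) (shift (B \<circ> A) l)) = UNIV) \<and>
           (upper_semi_fredholm (prod_dom DB B DA) (shift (A \<circ> B) l)
              \<longleftrightarrow> upper_semi_fredholm (prod_dom DA A DB) (shift (B \<circ> A) l)) \<and>
           (lower_semi_fredholm (prod_dom DB B DA) (shift (A \<circ> B) l)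
              \<longleftrightarrow> lower_semi_fredholm (prod_dom DA A DB) (shift (B \<circ> A) l)))
      \<and> ap_spectrum (prod_dom DB B DA) (A \<circ> B) - {0} = ap_spectrum (prod_dom DA A DB) (B \<circ> A) - {0}
      \<and> cont_spectrum (prod_dom DB B DA) (A \<circ> B) - {0} = cont_spectrum (prod_dom DA A DB) (B \<circ> A) - {0}
      \<and> res_spectrum (prod_dom DB B DA) (A \<circ> B) - {0} = res_spectrum (prod_dom DA A DB) (B \<circ> A) - {0}
      \<and> ess_spectrum (prod_dom DB B DA) (A \<circ> B) - {0} = ess_spectrum (prod_dom DA A DB) (B \<circ> A) - {0}"
proof -
  obtain \<mu> where \<mu>: "\<mu> \<in> resolvent_set (prod_dom DB B DA) (A \<circ> B)" using assms(7) by blast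
  obtain \<nu> where \<nu>: "\<nu> \<in> resolvent_set (prod_dom DA A DB) (B \<circ> A)" using assms(8) by blast
  interpret p1: pair DA A DB B \<mu> \<nu> by unfold_locales (use assms \<mu> \<nu> in auto)
  interpret p2: pair DB B DA A \<nu> \<mu> by unfold_locales (use assms \<mu> \<nu> in auto)
  let ?D1 = "prod_dom DB B DA" and ?D2 = "prod_dom DA A DB"
  let ?T = "A \<circ> B" and ?S = "B \<circ> A"
  have cl: "closed (op_range ?D1 (shift ?T l)) \<longleftrightarrow> closed (op_range ?D2 (shift ?S l))" if "l \<noteq> 0" for l
    using p1.closed_transfer[OF that] p2.closed_transfer[OF that] by blast
  have de: "closure (op_range ?D1 (shift ?T l)) = UNIV \<longleftrightarrow> closure (op_range ?D2 (shift ?S l)) = UNIV" if "l \<noteq> 0" for l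
    using p1.dense_transfer[OF that] p2.dense_transfer[OF that] by blast
  have fd: "finite_dimensional (op_kernel ?D1 (shift ?T l)) \<longleftrightarrow> finite_dimensional (op_kernel ?D2 (shift ?S l))" if "l \<noteq> 0" for l
    using p1.findim_transfer[OF that] p2.findim_transfer[OF that] by blast
  have cd: "finite_codim (op_range ?D1 (shift ?T l)) \<longleftrightarrow> finite_codim (op_range ?D2 (shift ?S l))" if "l \<noteq> 0" for l
    using p1.codim_transfer'[OF that] p2.codim_transfer'[OF that] by blast
  have ij: "inj_on (shift ?T l) ?D1 \<longleftrightarrow> inj_on (shift ?S l) ?D2" if "l \<noteq> 0" for l
    using p1.inj_transfer[OF that] p2.inj_transfer[OF that] by blast
  have su: "op_range ?D1 (shift ?T l) = UNIV \<longleftrightarrow> op_range ?D2 (shift ?S l) = UNIV" if "l \<noteq> 0" for l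
    using p1.surj_transfer[OF that] p2.surj_transfer[OF that] by blast
  have us: "upper_semi_fredholm ?D1 (shift ?T l) \<longleftrightarrow> upper_semi_fredholm ?D2 (shift ?S l)" if "l \<noteq> 0" for l
    unfolding upper_semi_fredholm_def using cl[OF that] fd[OF that] by blast
  have ls: "lower_semi_fredholm ?D1 (shift ?T l) \<longleftrightarrow> lower_semi_fredholm ?D2 (shift ?S l)" if "l \<noteq> 0" for l
    unfolding lower_semi_fredholm_def using cl[OF that] cd[OF that] by blast
  have ap: "l \<in> ap_spectrum ?D1 ?T \<longleftrightarrow> l \<in> ap_spectrum ?D2 ?S" if "l \<noteq> 0" for l
    using ap_char[OF p1.T.lin p1.T.graph_closed, of l] ap_char[OF p1.S.lin p1.S.graph_closed, of l]
      cl[OF that] ij[OF that] unfolding op_range_def by blast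
  have rs: "l \<in> resolvent_set ?D1 ?T \<longleftrightarrow> l \<in> resolvent_set ?D2 ?S" if "l \<noteq> 0" for l
    using res_char[OF p1.T.lin p1.T.graph_closed, of l] res_char[OF p1.S.lin p1.S.graph_closed, of l]
      ij[OF that] su[OF that] unfolding bij_betw_def op_range_def by blast
  have ct: "l \<in> cont_spectrum ?D1 ?T \<longleftrightarrow> l \<in> cont_spectrum ?D2 ?S" if "l \<noteq> 0" for l
    unfolding cont_spectrum_def spectrum_op_def using rs[OF that] ij[OF that] de[OF that] by blast
  have rr: "l \<in> res_spectrum ?D1 ?T \<longleftrightarrow> l \<in> res_spectrum ?D2 ?S" if "l \<noteq> 0" for l
    unfolding res_spectrum_def using ij[OF that] de[OF that] by blast
  have es: "l \<in> ess_spectrum ?D1 ?T \<longleftrightarrow> l \<in> ess_spectrum ?D2 ?S" if "l \<noteq> 0" for l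
    unfolding ess_spectrum_def fredholm_def using us[OF that] ls[OF that] by blast
  show ?thesis
    using cl de us ls ap ct rr es by blast
qed

end
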